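(* Let $h\in C[0,1]$, $c\in\mathbb R$, and let $q\in C[0,1]$ with $q>0$ on $(0,1)$. If $z\in C^1(0,1)$ satisfies $\dot z(\varphi)=h(\varphi)-c-q(\varphi)/z(\varphi)$ and $z(\varphi)<0$ for all $\varphi\in(0,1)$, then the limits $z(0^+)$ and $z(1^-)$ exist and are finite (and lie in $(-\infty,0]$), so $z$ extends continuously to $[0,1]$. *)

theory Defs
  imports "HOL-Analysis.Analysis"
begin

end

theory Submission
  imports Defs
begin

lemma mono_lim_right:
  fixes g :: "real \<Rightarrow> real"
  assumes ab: "a < b"
    and mono: "\<And>x y. a < x \<Longrightarrow> x \<le> y \<Longrightarrow> y < b \<Longrightarrow> g x \<le> g y"
    and lb: "\<And>x. a < x \<Longrightarrow> x < b \<Longrightarrow> L \<le> g x"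
  shows "(g \<longlongrightarrow> Inf (g ` {a<..<b})) (at_right a)"
proof -
  let ?S = "g ` {a<..<b}"
  have ne: "?S \<noteq> {}" using ab by auto
  have bdd: "bdd_below ?S" using lb by (auto intro!: bdd_belowI[of _ L])
  show ?thesis
  proof (rule order_tendstoI)
    fix l assume "l < Inf ?S"
    have "eventually (\<lambda>x. x \<in> {a<..<b}) (at_right a)" by (rule eventually_at_right_real[OF ab])
    then show "eventually (\<lambda>x. l < g x) (at_right a)"
    proof (rule eventually_mono)
      fix x assume "x \<in> {a<..<b}"
      then have "Inf ?S \<le> g x" using bdd by (auto intro!: cInf_lower)
      then show "l < g x" using \<open>l < Inf ?S\<close> by linarith
    qed
  next
    fix u assume "Inf ?S < u"
    from cInf_lessD[OF ne this] obtain y where y: "y \<in> {a<..<b}" "g y < u" by auto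
    have "eventually (\<lambda>x. x \<in> {a<..<y}) (at_right a)" by (rule eventually_at_right_real) (use y in auto)
    then show "eventually (\<lambda>x. g x < u) (at_right a)"
    proof (rule eventually_mono)
      fix x assume "x \<in> {a<..<y}"
      then have "g x \<le> g y" using y by (intro mono) auto
      then show "g x < u" using y by linarith
    qed
  qed
qed

lemma mono_lim_left:
  fixes g :: "real \<Rightarrow> real"
  assumes ab: "a < b"
    and mono: "\<And>x y. a < x \<Longrightarrow> x \<le> y \<Longrightarrow> y < b \<Longrightarrow> g x \<le> g y"
    and ub: "\<And>x. a < x \<Longrightarrow> x < b \<Longrightarrow> g x \<le> U"
  shows "(g \<longlongrightarrow> Sup (g ` {a<..<b})) (at_left b)"
proof -
  let ?S = "g ` {a<..<b}"
  have ne: "?S \<noteq> {}" using ab by auto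
  have bdd: "bdd_above ?S" using ub by (auto intro!: bdd_aboveI[of _ U])
  show ?thesis
  proof (rule order_tendstoI)
    fix u assume "Sup ?S < u"
    have "eventually (\<lambda>x. x \<in> {a<..<b}) (at_left b)" by (rule eventually_at_left_real[OF ab])
    then show "eventually (\<lambda>x. g x < u) (at_left b)"
    proof (rule eventually_mono)
      fix x assume "x \<in> {a<..<b}"
      then have "g x \<le> Sup ?S" using bdd by (auto intro!: cSup_upper)
      then show "g x < u" using \<open>Sup ?S < u\<close> by linarith
    qed
  next
    fix l assume "l < Sup ?S"
    from less_cSupD[OF ne this] obtain y where y: "y \<in> {a<..<b}" "l < g y" by auto
    have "eventually (\<lambda>x. x \<in> {y<..<b}) (at_left b)" by (rule eventually_at_left_real) (use y in auto)
    then show "eventually (\<lambda>x. l < g x) (at_left b)"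
    proof (rule eventually_mono)
      fix x assume "x \<in> {y<..<b}"
      then have "g y \<le> g x" using y by (intro mono) auto
      then show "l < g x" using y by linarith
    qed
  qed
qed

theorem lemma3p1:
  fixes h q z :: "real \<Rightarrow> real" and c :: real
  assumes h_cont: "continuous_on {0..1} h"
    and q_cont: "continuous_on {0..1} q"
    and q_pos: "\<And>\<phi>. \<phi> \<in> {0<..<1} \<Longrightarrow> q \<phi> > 0"
    and z_C1: "continuous_on {0<..<1} (deriv z)"
    and z_ode: "\<And>\<phi>. \<phi> \<in> {0<..<1} \<Longrightarrow>
                  (z has_real_derivative (h \<phi> - c - q \<phi> / z \<phi>)) (at \<phi>)"
    and z_neg: "\<And>\<phi>. \<phi> \<in> {0<..<1} \<Longrightarrow> z \<phi> < 0"
  shows "\<exists>z0 z1. z0 \<le> 0 \<and> z1 \<le> 0 \<and>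
           (z \<longlongrightarrow> z0) (at_right 0) \<and> (z \<longlongrightarrow> z1) (at_left 1) \<and>
           continuous_on {0..1} (\<lambda>\<phi>. if \<phi> = 0 then z0 else if \<phi> = 1 then z1 else z \<phi>)"
proof -
  have "continuous_on {0..1} (\<lambda>x. h x - c)" using h_cont by (intro continuous_intros)
  then have "bounded ((\<lambda>x. h x - c) ` {0..1})"
    by (intro compact_imp_bounded compact_continuous_image) auto
  then obtain M0 where M0: "\<And>x. x \<in> {0..1} \<Longrightarrow> \<bar>h x - c\<bar> \<le> M0"
    unfolding bounded_iff by (auto simp del: atLeastAtMost_iff)
  define M where "M = max M0 0"
  have M: "\<And>x. x \<in> {0..1} \<Longrightarrow> \<bar>h x - c\<bar> \<le> M" and M0': "M \<ge> 0"
    using M0 unfolding M_def by force+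
  have "bounded (q ` {0..1})"
    by (intro compact_imp_bounded compact_continuous_image q_cont) auto
  then obtain Q0 where Q0: "\<And>x. x \<in> {0..1} \<Longrightarrow> \<bar>q x\<bar> \<le> Q0"
    unfolding bounded_iff by (auto simp del: atLeastAtMost_iff)
  define Q where "Q = max Q0 0"
  have Q: "\<And>x. x \<in> {0..1} \<Longrightarrow> \<bar>q x\<bar> \<le> Q" and Q0': "Q \<ge> 0"
    using Q0 unfolding Q_def by force+
  define g where "g = (\<lambda>x. z x + M * x)"
  have g_mono: "g x \<le> g y" if "0 < x" "x \<le> y" "y < 1" for x y
  proof (rule DERIV_nonneg_imp_nondecreasing[OF \<open>x \<le> y\<close>])
    fix t assume t: "x \<le> t" "t \<le> y"
    then have t01: "t \<in> {0<..<1}" using that by auto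
    have "(g has_real_derivative (h t - c - q t / z t + M)) (at t)"
      unfolding g_def using z_ode[OF t01] by (auto intro!: derivative_eq_intros)
    moreover have "h t - c - q t / z t + M \<ge> 0"
    proof -
      have "q t / z t < 0" using q_pos[OF t01] z_neg[OF t01] by (simp add: divide_pos_neg)
      moreover have "\<bar>h t - c\<bar> \<le> M" using M t01 by auto
      ultimately show ?thesis by linarith
    qed
    ultimately show "\<exists>y. (g has_real_derivative y) (at t) \<and> 0 \<le> y" by blast
  qed
  define K where "K = M^2 + 2 * Q"
  define w where "w = (\<lambda>x. exp x * ((z x)^2 + K))"
  have w_mono: "w x \<le> w y" if "0 < x" "x \<le> y" "y < 1" for x y
  proof (rule DERIV_nonneg_imp_nondecreasing[OF \<open>x \<le> y\<close>])
    fix t assume t: "x \<le> t" "t \<le> y"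
    then have t01: "t \<in> {0<..<1}" using that by auto
    have zt: "z t \<noteq> 0" using z_neg[OF t01] by auto
    have "(w has_real_derivative (exp t * ((z t)^2 + K) + exp t * (2 * z t * (h t - c - q t / z t)))) (at t)"
      unfolding w_def using z_ode[OF t01] by (auto intro!: derivative_eq_intros)
    moreover have "exp t * ((z t)^2 + K) + exp t * (2 * z t * (h t - c - q t / z t)) \<ge> 0"
    proof -
      have e: "2 * z t * (h t - c - q t / z t) = 2 * z t * (h t - c) - 2 * q t"
        using zt by (simp add: field_simps)
      have "0 \<le> (z t + (h t - c))^2" by simp
      moreover have "(h t - c)^2 \<le> M^2" using M[of t] t01
        by (metis abs_ge_zero abs_le_square_iff greaterThanLessThan_iff atLeastAtMost_iff less_imp_le
             power2_abs order_trans abs_of_nonneg M0' abs_power2)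
      moreover have "q t \<le> Q" using Q[of t] t01 by auto
      ultimately have "(z t)^2 + K + (2 * z t * (h t - c) - 2 * q t) \<ge> 0"
        unfolding K_def by (simp add: power2_eq_square algebra_simps)
      then show ?thesis using e by (simp add: distrib_left[symmetric])
    qed
    ultimately show "\<exists>y. (w has_real_derivative y) (at t) \<and> 0 \<le> y" by blast
  qed
  define B where "B = w (1/2)"
  have zlow: "z x \<ge> - (B + 1)" if "0 < x" "x \<le> 1/2" for x
  proof -
    have "w x \<le> B" unfolding B_def using w_mono[of x "1/2"] that by auto
    moreover have "(z x)^2 \<le> w x"
    proof -
      have "(z x)^2 \<le> (z x)^2 + K" unfolding K_def using Q0' by simp
      also have "\<dots> \<le> exp x * ((z x)^2 + K)"
        using mult_right_mono[of 1 "exp x" "(z x)^2 + K"] that Q0' by (simp add: K_def)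
      finally show ?thesis unfolding w_def .
    qed
    ultimately have sq: "(z x)^2 \<le> B" by linarith
    show ?thesis
    proof (cases "\<bar>z x\<bar> \<le> 1")
      case True
      have "0 \<le> B" using sq by (metis order_trans zero_le_power2)
      then show ?thesis using True by linarith
    next
      case False
      then have "\<bar>z x\<bar> \<le> (z x)^2" by (simp add: power2_eq_square abs_le_square_iff)
        (metis abs_ge_zero abs_mult_self_eq less_le_not_le linorder_linear mult_le_cancel_left1 not_le)
      then show ?thesis using sq by linarith
    qed
  qed
  define L where "L = min (- (B + 1)) (g (1/2))"
  have g_lb: "L \<le> g x" if "0 < x" "x < 1" for x
  proof (cases "x \<le> 1/2")
    case True
    then have "z x \<ge> - (B + 1)" using zlow that by auto
    moreover have "M * x \<ge> 0" using M0' that by simp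
    ultimately show ?thesis unfolding L_def g_def by linarith
  next
    case False
    then have "g (1/2) \<le> g x" using g_mono that by auto
    then show ?thesis unfolding L_def by linarith
  qed
  have g_ub: "g x \<le> M" if "0 < x" "x < 1" for x
  proof -
    have "z x < 0" using z_neg that by auto
    moreover have "M * x \<le> M" using M0' that by (simp add: mult_left_le)
    ultimately show ?thesis unfolding g_def by linarith
  qed
  define A0 where "A0 = Inf (g ` {0<..<1})"
  define A1 where "A1 = Sup (g ` {0<..<1})"
  have gl0: "(g \<longlongrightarrow> A0) (at_right 0)" unfolding A0_def
    by (rule mono_lim_right[where L=L]) (use g_mono g_lb in auto)
  have gl1: "(g \<longlongrightarrow> A1) (at_left 1)" unfolding A1_def
    by (rule mono_lim_left[where U=M]) (use g_mono g_ub in auto)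
  have zeq: "z x = g x - M * x" for x unfolding g_def by simp
  have zl0: "(z \<longlongrightarrow> A0 - M * 0) (at_right 0)"
    unfolding zeq by (intro tendsto_intros gl0 tendsto_ident_at)
  have zl1: "(z \<longlongrightarrow> A1 - M * 1) (at_left 1)"
    unfolding zeq by (intro tendsto_intros gl1 tendsto_ident_at)
  define z0 where "z0 = A0 - M * 0"
  define z1 where "z1 = A1 - M * 1"
  have ev0: "eventually (\<lambda>x. z x \<le> 0) (at_right 0)"
    using eventually_at_right_real[OF zero_less_one] by (rule eventually_mono) (meson z_neg less_imp_le)
  have ev1: "eventually (\<lambda>x. z x \<le> 0) (at_left 1)"
    using eventually_at_left_real[OF zero_less_one] by (rule eventually_mono) (meson z_neg less_imp_le)
  have z0le: "z0 \<le> 0" unfolding z0_def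
    by (rule tendsto_upperbound[OF zl0 ev0]) simp
  have z1le: "z1 \<le> 0" unfolding z1_def
    by (rule tendsto_upperbound[OF zl1 ev1]) simp
  define F where "F = (\<lambda>\<phi>. if \<phi> = 0 then z0 else if \<phi> = 1 then z1 else z \<phi>)"
  have cont: "continuous_on {0..1} F"
    unfolding continuous_on
  proof
    fix x :: real assume x: "x \<in> {0..1}"
    consider "x = 0" | "x = 1" | "x \<in> {0<..<1}" using x by fastforce
    then show "(F \<longlongrightarrow> F x) (at x within {0..1})"
    proof cases
      case 1
      have "at x within {0..1} = at x within {0<..1}"
      proof -
        have "{0..1} - {x} = {0<..1} - {x}" using 1 by auto
        then show ?thesis unfolding at_within_def by simp
      qed
      also have "\<dots> \<le> at_right 0" using 1 by (auto intro!: at_le)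
      finally have le: "at x within {0..1} \<le> at_right 0" .
      have "(F \<longlongrightarrow> z0) (at_right 0)"
      proof (rule Lim_transform_eventually[OF zl0[folded z0_def]])
        show "eventually (\<lambda>y. z y = F y) (at_right 0)"
          using eventually_at_right_real[of 0 1] by (rule eventually_mono) (auto simp: F_def)
      qed
      then show ?thesis using 1 le by (auto simp: F_def intro: tendsto_mono)
    next
      case 2
      have "at x within {0..1} = at x within {0..<1}"
      proof -
        have "{0..1} - {x} = {0..<1} - {x}" using 2 by auto
        then show ?thesis unfolding at_within_def by simp
      qed
      also have "\<dots> \<le> at_left 1" using 2 by (auto intro!: at_le)
      finally have le: "at x within {0..1} \<le> at_left 1" .
      have "(F \<longlongrightarrow> z1) (at_left 1)"
      proof (rule Lim_transform_eventually[OF zl1[folded z1_def]])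
        show "eventually (\<lambda>y. z y = F y) (at_left 1)"
          using eventually_at_left_real[of 0 1] by (rule eventually_mono) (auto simp: F_def)
      qed
      then show ?thesis using 2 le by (auto simp: F_def intro: tendsto_mono)
    next
      case 3
      have "isCont z x" using z_ode[OF 3] by (rule DERIV_isCont)
      then have zt: "(z \<longlongrightarrow> z x) (at x)" by (simp add: isCont_def)
      have "eventually (\<lambda>y. y \<in> {0<..<1}) (at x)"
        using 3 by (intro eventually_at_in_open') auto
      then have "eventually (\<lambda>y. z y = F y) (at x)"
        by (rule eventually_mono) (auto simp: F_def)
      from Lim_transform_eventually[OF zt this] have "(F \<longlongrightarrow> F x) (at x)"
        using 3 by (simp add: F_def)
      then show ?thesis by (rule tendsto_mono[rotated]) (rule at_le, simp)
    qed
  qed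
  show ?thesis
    using z0le z1le zl0 zl1 cont unfolding z0_def z1_def F_def by blast
qed

end
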